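(* Fix an integer $d\ge 1$, $h\in[0,1]$ with $hd\in\mathbb{Z}$, and $p\in(0,\tfrac12]$. Consider the binary node-classification setting described in the context, with training set containing nodes of both classes, and the heterophilous one-layer linear GNN $F'(\mathbf{X})=(\mathbf{X}\,\Vert\,\mathbf{A}\mathbf{X})\mathbf{W}$, where $\Vert$ is row-wise concatenation, so each node $i$ is represented by the $4$-dimensional row $\mathbf{u}_i=[\mathbf{x}_i,\ \sum_{j\in N_1(i)}\mathbf{x}_j]$ and $\mathbf{W}$ is $4\times 2$. Let $\mathbf{R}$ be the $2\times 4$ matrix whose rows are the (common) representation $\mathbf{u}^{(0)}$ of class-$0$ training nodes and the (common) representation $\mathbf{u}^{(1)}$ of class-$1$ training nodes, and let $\mathbf{W}=\mathbf{R}^{\top}(\mathbf{R}\mathbf{R}^{\top})^{-1}\begin{bmatrix}1&0\\0&1\end{bmatrix}$ (the minimum-norm solution of $\mathbf{u}_i\mathbf{W}=\mathbf{y}_i$ for all training nodes $i$; $\mathbf{R}\mathbf{R}^\top$ is invertible under these hypotheses). Let $t$ be a test node of class $0$ (so $\mathbf{y}_t=[1,0]$, $\mathbf{x}_t=[\tfrac12+p,\tfrac12-p]$) of degree $d$ with local homophily ratio $h_t=h+\alpha_t\in[0,1]$, i.e. exactly $h_t d$ of its $d$ neighbors have class $0$. Then the output logit vector $\mathbf{z}_t=\mathbf{u}_t\mathbf{W}$ satisfies $$\mathbf{z}_t=\mathbf{y}_t+b_1'\,[\alpha_t,\ -\alpha_t],\qquad b_1'=\frac{d^2(2h-1)}{1+d^2(2h-1)^2},$$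 equivalently $\mathbf{z}_t=\frac{1}{1+d^2(2h-1)^2}\big[\,1+d^2(2h-1)(h+h_t-1),\ \ d^2(2h-1)(h-h_t)\,\big]$.
   Context: Binary node classification on a simple graph $G$ with adjacency matrix $\mathbf{A}$. Each node $i$ has a class $y_i\in\{0,1\}$, one-hot label vector $\mathbf{y}_i=[1,0]$ if $y_i=0$ and $[0,1]$ if $y_i=1$, and feature vector $\mathbf{x}_i=[\tfrac12+p,\ \tfrac12-p]$ if $y_i=0$ and $\mathbf{x}_i=[\tfrac12-p,\ \tfrac12+p]$ if $y_i=1$, where $p\in[0,\tfrac12]$ is a fixed parameter. $\mathbf{X}$ is the matrix whose rows are the $\mathbf{x}_i$. The local homophily ratio of a node $t$ is the fraction of its neighbors having the same class as $t$. Standing assumption on the training set: every training node has degree exactly $d$ and local homophily ratio exactly $h$ (so it has $hd$ neighbors of its own class and $(1-h)d$ of the other class); consequently all class-$0$ training nodes share one representation $\mathbf{u}^{(0)}$ and all class-$1$ training nodes share one representation $\mathbf{u}^{(1)}$. $N_1(i)$ denotes the set of neighbors of $i$. $\alpha_t=h_t-h$ is the shift of the test node's local homophily from the global homophily $h$. *)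

theory Defs
  imports "HOL-Analysis.Analysis"
begin

definition feat :: "real \<Rightarrow> nat \<Rightarrow> real^2" where
  "feat p c = (if c = 0 then vector [1/2 + p, 1/2 - p] else vector [1/2 - p, 1/2 + p])"

definition onehot :: "nat \<Rightarrow> real^2" where
  "onehot c = (if c = 0 then vector [1, 0] else vector [0, 1])"

definition nbrs :: "'a set \<Rightarrow> ('a \<Rightarrow> 'a \<Rightarrow> bool) \<Rightarrow> 'a \<Rightarrow> 'a set" where
  "nbrs V E i = {j \<in> V. E i j}"

definition local_homophily :: "'a set \<Rightarrow> ('a \<Rightarrow> 'a \<Rightarrow> bool) \<Rightarrow> ('a \<Rightarrow> nat) \<Rightarrow> 'a \<Rightarrow> real" where
  "local_homophily V E y i = real (card {j \<in> nbrs V E i. y j = y i}) / real (card (nbrs V E i))"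

definition rep :: "'a set \<Rightarrow> ('a \<Rightarrow> 'a \<Rightarrow> bool) \<Rightarrow> ('a \<Rightarrow> nat) \<Rightarrow> real \<Rightarrow> 'a \<Rightarrow> real^4" where
  "rep V E y p i = (let a = (\<Sum>j\<in>nbrs V E i. feat p (y j))
     in vector [feat p (y i) $ 1, feat p (y i) $ 2, a $ 1, a $ 2])"

end

theory Submission
  imports Defs
begin

lemma vector_4 [simp]:
 "(vector [x1,x2,x3,x4] ::('a::zero)^4)$1 = x1"
 "(vector [x1,x2,x3,x4] ::('a::zero)^4)$2 = x2"
 "(vector [x1,x2,x3,x4] ::('a::zero)^4)$3 = x3"
 "(vector [x1,x2,x3,x4] ::('a::zero)^4)$4 = x4"
  unfolding vector_def by simp_all

lemma matrix_inv_eq: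
  fixes A :: "real^'n^'m" and B :: "real^'m^'n"
  assumes "A ** B = mat 1" "B ** A = mat 1"
  shows "matrix_inv A = B"
proof -
  have ex: "\<exists>A'. A ** A' = mat 1 \<and> A' ** A = mat 1" using assms by blast
  have "A ** matrix_inv A = mat 1 \<and> matrix_inv A ** A = mat 1"
    unfolding matrix_inv_def by (rule someI_ex[OF ex])
  then have "matrix_inv A = matrix_inv A ** (A ** B)" using assms by simp
  also have "\<dots> = (matrix_inv A ** A) ** B" by (simp add: matrix_mul_assoc)
  also have "\<dots> = B" using \<open>A ** matrix_inv A = mat 1 \<and> matrix_inv A ** A = mat 1\<close> by simp
  finally show ?thesis .
qed

lemma core:
  fixes a b A0 B0 At Bt :: real
  defines "u0 \<equiv> vector [a, b, A0, B0] :: real^4"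
  defines "u1 \<equiv> vector [b, a, B0, A0] :: real^4"
  defines "ut \<equiv> vector [a, b, At, Bt] :: real^4"
  defines "g \<equiv> a^2+b^2+A0^2+B0^2"
  defines "k \<equiv> 2*a*b + 2*A0*B0"
  defines "q1 \<equiv> a^2+b^2+At*A0+Bt*B0"
  defines "q2 \<equiv> 2*a*b+At*B0+Bt*A0"
  assumes ab: "a \<noteq> b" and ab2: "a + b \<noteq> 0"
  shows "let R = (vector [u0, u1] :: real^4^2)
         in ut v* (transpose R ** matrix_inv (R ** transpose R) ** (mat 1 :: real^2^2))
            = vector [(q1*g - q2*k)/(g^2-k^2), (q2*g - q1*k)/(g^2-k^2)]"
proof -
  define R where "R = (vector [u0, u1] :: real^4^2)"
  define M where "M = (vector [vector [g/(g^2-k^2), -k/(g^2-k^2)], vector [-k/(g^2-k^2), g/(g^2-k^2)]] :: real^2^2)"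
  have G: "R ** transpose R = (vector [vector [g, k], vector [k, g]] :: real^2^2)"
    unfolding R_def u0_def u1_def g_def k_def
    by (simp add: vec_eq_iff forall_2 matrix_matrix_mult_def transpose_def sum_4 power2_eq_square)
  have gk1: "g - k > 0"
  proof -
    have "g - k = (a-b)^2 + (A0-B0)^2" unfolding g_def k_def by (simp add: power2_eq_square algebra_simps)
    moreover have "(a-b)^2 > 0" using ab by simp
    ultimately show ?thesis by (smt (verit) zero_le_power2)
  qed
  have gk2: "g + k > 0"
  proof -
    have "g + k = (a+b)^2 + (A0+B0)^2" unfolding g_def k_def by (simp add: power2_eq_square algebra_simps)
    moreover have "(a+b)^2 > 0" using ab2 by simp
    ultimately show ?thesis by (smt (verit) zero_le_power2)
  qed
  have gk: "g^2 - k^2 \<noteq> 0"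
  proof -
    have "g^2 - k^2 = (g-k)*(g+k)" by (simp add: power2_eq_square algebra_simps)
    then show ?thesis using gk1 gk2 by simp
  qed
  have gk3: "g * (g * (g * g)) + k * (k * (k * k)) \<noteq> g * (g * (k * (k * 2)))"
  proof
    assume "g * (g * (g * g)) + k * (k * (k * k)) = g * (g * (k * (k * 2)))"
    then have "(g^2-k^2)^2 = 0" by (simp add: power2_eq_square algebra_simps)
    then show False using gk by simp
  qed
  have inv: "matrix_inv (R ** transpose R) = M"
    unfolding G M_def
    apply (rule matrix_inv_eq)
    using gk gk3 by (simp_all add: vec_eq_iff forall_2 matrix_matrix_mult_def sum_2 mat_def field_simps power2_eq_square)
  have Q: "ut v* transpose R = vector [q1, q2]"
    unfolding R_def u0_def u1_def ut_def q1_def q2_def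
    by (simp add: vec_eq_iff forall_2 vector_matrix_mult_def transpose_def sum_4 power2_eq_square algebra_simps)
  have "ut v* (transpose R ** matrix_inv (R ** transpose R) ** (mat 1 :: real^2^2)) = (ut v* transpose R) v* M"
    by (simp add: inv vector_matrix_mul_assoc del: vector_transpose_matrix)
  also have "\<dots> = vector [(q1*g - q2*k)/(g^2-k^2), (q2*g - q1*k)/(g^2-k^2)]"
    unfolding Q M_def
    by (simp add: vec_eq_iff forall_2 vector_matrix_mult_def sum_2 diff_divide_distrib add_divide_distrib algebra_simps)
  finally show ?thesis unfolding Let_def R_def .
qed
lemma fin:
  fixes d h p sv :: real
  assumes d: "d > 0" and p: "p > 0"
  defines "a \<equiv> 1/2 + p" and "b \<equiv> 1/2 - p"
  defines "A0 \<equiv> h*d*a + (d - h*d)*b" and "B0 \<equiv> h*d*b + (d - h*d)*a"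
  defines "At \<equiv> sv*a + (d - sv)*b" and "Bt \<equiv> sv * b + (d - sv)*a"
  defines "g \<equiv> a^2+b^2+A0^2+B0^2"
  defines "k \<equiv> 2*a*b + 2*A0*B0"
  defines "q1 \<equiv> a^2+b^2+At*A0+Bt*B0"
  defines "q2 \<equiv> 2*a*b+At*B0+Bt*A0"
  defines "c \<equiv> d*(2*h-1)"
  defines "b1 \<equiv> d^2 * (2*h - 1) / (1 + d^2 * (2*h - 1)^2)"
  shows "(q1*g - q2*k)/(g^2-k^2) = 1 + b1*(sv/d - h)"
    and "(q2*g - q1*k)/(g^2-k^2) = b1*(-(sv/d - h))"
proof -
  have c2: "1 + c^2 > 0" by (simp add: add_pos_nonneg)
  have amb: "a - b = 2*p" unfolding a_def b_def by simp
  have AmB: "A0 - B0 = c*(a-b)" unfolding A0_def B0_def c_def by (simp add: algebra_simps)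
  have AtmBt: "At - Bt = (2 * sv - d)*(a-b)" unfolding At_def Bt_def by (simp add: algebra_simps)
  have gmk: "g - k = 4*p^2*(1+c^2)"
  proof -
    have "g - k = (a-b)^2 + (A0-B0)^2" unfolding g_def k_def by (simp add: power2_eq_square algebra_simps)
    then show ?thesis unfolding AmB amb by (simp add: power2_eq_square algebra_simps)
  qed
  have ab1: "a + b = 1" unfolding a_def b_def by simp
  have AB: "A0 + B0 = d" unfolding A0_def B0_def using ab1 by (simp add: algebra_simps) (metis distrib_left mult.commute mult_1 ab1 add.commute)
  have gpk: "g + k = 1 + d^2"
  proof -
    have "g + k = (a+b)^2 + (A0+B0)^2" unfolding g_def k_def by (simp add: power2_eq_square algebra_simps)
    then show ?thesis using ab1 AB by simp
  qed
  have AtBt: "At + Bt = d" unfolding At_def Bt_def using ab1 by (simp add: algebra_simps) (metis distrib_left mult.commute mult_1 ab1 add.commute)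
  have qm: "q1 - q2 = 4*p^2*(1 + c*(2 * sv - d))"
  proof -
    have "q1 - q2 = (a-b)^2 + (At-Bt)*(A0-B0)" unfolding q1_def q2_def by (simp add: power2_eq_square algebra_simps)
    then show ?thesis unfolding AmB amb AtmBt by (simp add: power2_eq_square algebra_simps)
  qed
  have qp: "q1 + q2 = 1 + d^2"
  proof -
    have "q1 + q2 = (a+b)^2 + (At+Bt)*(A0+B0)" unfolding q1_def q2_def by (simp add: power2_eq_square algebra_simps)
    then show ?thesis unfolding AB ab1 AtBt by (simp add: power2_eq_square)
  qed
  have gmk0: "g - k \<noteq> 0" using gmk p c2 by simp
  have gpk0: "g + k \<noteq> 0" unfolding gpk by (smt (verit) zero_le_power2)
  have den: "g^2 - k^2 = (g-k)*(g+k)" by (simp add: power2_eq_square algebra_simps)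
  have num: "1 + c*(2 * sv - d) = (1+c^2) + 2*c*d*(sv/d - h)"
    unfolding c_def using d by (simp add: field_simps power2_eq_square)
  have r: "(q1-q2)/(g-k) = 1 + 2*c*d*(sv/d - h)/(1+c^2)"
  proof -
    have "(q1-q2)/(g-k) = (1 + c*(2 * sv - d))/(1+c^2)" unfolding qm gmk using p by simp
    also have "\<dots> = 1 + 2*c*d*(sv/d - h)/(1+c^2)" unfolding num using c2 by (simp add: add_divide_distrib)
    finally show ?thesis .
  qed
  have b1c: "b1 = c*d/(1+c^2)" unfolding b1_def c_def by (simp add: power2_eq_square algebra_simps)
  have e1: "(q1*g - q2*k)/(g^2-k^2) = (1 + (q1-q2)/(g-k))/2"
  proof -
    have "q1*g - q2*k = ((q1+q2)*(g-k) + (q1-q2)*(g+k))/2" by (simp add: algebra_simps)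
    also have "\<dots> = (g+k)*((g-k) + (q1-q2))/2" using qp gpk by (simp add: algebra_simps)
    finally have X: "q1*g - q2*k = (g+k)*((g-k) + (q1-q2))/2" .
    have "(g+k)*((g-k) + (q1-q2))/2 / ((g-k)*(g+k)) = ((g+k)*((g-k) + (q1-q2)))/((g+k)*(2*(g-k)))"
      by (simp add: divide_divide_eq_left algebra_simps)
    also have "\<dots> = ((g-k) + (q1-q2))/(2*(g-k))"
      by (rule nonzero_mult_divide_mult_cancel_left[OF gpk0])
    also have "\<dots> = (1 + (q1-q2)/(g-k))/2" using gmk0 by (simp add: field_simps)
    finally show ?thesis unfolding den X .
  qed
  have e2: "(q2*g - q1*k)/(g^2-k^2) = (1 - (q1-q2)/(g-k))/2"
  proof -
    have "q2*g - q1*k = ((q1+q2)*(g-k) - (q1-q2)*(g+k))/2" by (simp add: algebra_simps)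
    also have "\<dots> = (g+k)*((g-k) - (q1-q2))/2" using qp gpk by (simp add: algebra_simps)
    finally have X: "q2*g - q1*k = (g+k)*((g-k) - (q1-q2))/2" .
    have "(g+k)*((g-k) - (q1-q2))/2 / ((g-k)*(g+k)) = ((g+k)*((g-k) - (q1-q2)))/((g+k)*(2*(g-k)))"
      by (simp add: divide_divide_eq_left algebra_simps)
    also have "\<dots> = ((g-k) - (q1-q2))/(2*(g-k))"
      by (rule nonzero_mult_divide_mult_cancel_left[OF gpk0])
    also have "\<dots> = (1 - (q1-q2)/(g-k))/2" using gmk0 by (simp add: field_simps)
    finally show ?thesis unfolding den X .
  qed
  show "(q1*g - q2*k)/(g^2-k^2) = 1 + b1*(sv/d - h)"
    unfolding e1 r b1c using c2 by (simp add: field_simps)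
  show "(q2*g - q1*k)/(g^2-k^2) = b1*(-(sv/d - h))"
    unfolding e2 r b1c using c2 by (simp add: field_simps)
qed
lemma card_split:
  assumes "finite N"
  shows "card N = card {j\<in>N. P j} + card {j\<in>N. \<not> P j}"
proof -
  have "N = {j\<in>N. P j} \<union> {j\<in>N. \<not> P j}" by auto
  then have "card N = card ({j\<in>N. P j} \<union> {j\<in>N. \<not> P j})" by simp
  also have "\<dots> = card {j\<in>N. P j} + card {j\<in>N. \<not> P j}"
    by (rule card_Un_disjoint) (use assms in auto)
  finally show ?thesis .
qed

lemma nbr_sum:
  assumes "finite V"
  shows "(\<Sum>j\<in>nbrs V E i. feat p (y j)) =
    real (card {j\<in>nbrs V E i. y j = 0}) *\<^sub>R feat p 0 + real (card {j\<in>nbrs V E i. y j \<noteq> 0}) *\<^sub>R feat p 1"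
proof -
  let ?N = "nbrs V E i"
  have fin: "finite ?N" using assms unfolding nbrs_def by simp
  have "(\<Sum>j\<in>?N. feat p (y j)) = (\<Sum>j\<in>?N \<inter> {j. y j = 0}. feat p (y j)) + (\<Sum>j\<in>?N - {j. y j = 0}. feat p (y j))"
    by (rule sum.Int_Diff[OF fin])
  also have "(\<Sum>j\<in>?N \<inter> {j. y j = 0}. feat p (y j)) = (\<Sum>j\<in>{j\<in>?N. y j = 0}. feat p 0)"
    by (rule sum.cong) auto
  also have "(\<Sum>j\<in>?N - {j. y j = 0}. feat p (y j)) = (\<Sum>j\<in>{j\<in>?N. y j \<noteq> 0}. feat p 1)"
    by (rule sum.cong) (auto simp: feat_def)
  finally show ?thesis by (simp only: sum_constant_scaleR)
qed

lemma rep_eq: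
  assumes "finite V"
  shows "rep V E y p i = vector [feat p (y i) $ 1, feat p (y i) $ 2,
     real (card {j\<in>nbrs V E i. y j = 0}) * (1/2+p) + real (card {j\<in>nbrs V E i. y j \<noteq> 0}) * (1/2-p),
     real (card {j\<in>nbrs V E i. y j = 0}) * (1/2-p) + real (card {j\<in>nbrs V E i. y j \<noteq> 0}) * (1/2+p)]"
  unfolding rep_def Let_def nbr_sum[OF assms] by (simp add: feat_def)

theorem theorem2:
  fixes V :: "'a set" and E :: "'a \<Rightarrow> 'a \<Rightarrow> bool" and y :: "'a \<Rightarrow> nat"
    and Tr :: "'a set" and d :: nat and h p :: real and t :: 'a
  assumes finV: "finite V"
    and sym: "\<And>i j. E i j \<Longrightarrow> E j i"
    and irrefl: "\<And>i. \<not> E i i"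
    and cls: "\<And>i. i \<in> V \<Longrightarrow> y i \<in> {0, 1}"
    and d1: "d \<ge> 1"
    and h01: "0 \<le> h" "h \<le> 1"
    and hd_int: "h * real d \<in> \<int>"
    and p01: "0 < p" "p \<le> 1/2"
    and TrV: "Tr \<subseteq> V"
    and Tr0: "\<exists>i\<in>Tr. y i = 0"
    and Tr1: "\<exists>i\<in>Tr. y i = 1"
    and Trdeg: "\<And>i. i \<in> Tr \<Longrightarrow> card (nbrs V E i) = d"
    and Trhom: "\<And>i. i \<in> Tr \<Longrightarrow> local_homophily V E y i = h"
    and tV: "t \<in> V" and t0: "y t = 0"
    and tdeg: "card (nbrs V E t) = d"
  shows
    "let u0 = rep V E y p (SOME i. i \<in> Tr \<and> y i = 0);
         u1 = rep V E y p (SOME i. i \<in> Tr \<and> y i = 1);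
         R = (vector [u0, u1] :: real^4^2);
         W = transpose R ** matrix_inv (R ** transpose R) ** (mat 1 :: real^2^2);
         ht = local_homophily V E y t;
         \<alpha>t = ht - h;
         b1 = (real d)^2 * (2*h - 1) / (1 + (real d)^2 * (2*h - 1)^2)
     in rep V E y p t v* W = onehot 0 + b1 *\<^sub>R vector [\<alpha>t, - \<alpha>t]"
proof -
  let ?N = "nbrs V E"
  define a where "a = 1/2 + p"
  define b where "b = 1/2 - p"
  have dpos: "real d > 0" using d1 by simp
  have Nsub: "\<And>i. ?N i \<subseteq> V" unfolding nbrs_def by auto
  have Nfin: "\<And>i. finite (?N i)" using finV Nsub finite_subset by blast
  have cs: "\<And>i. real (card {j\<in>?N i. y j \<noteq> 0}) = real (card (?N i)) - real (card {j\<in>?N i. y j = 0})"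
    using card_split[OF Nfin, of _ "\<lambda>j. y j = 0"] by simp
  have f0: "feat p 0 $ 1 = a" "feat p 0 $ 2 = b" unfolding feat_def a_def b_def by simp_all
  have f1: "feat p 1 $ 1 = b" "feat p 1 $ 2 = a" unfolding feat_def a_def b_def by simp_all
  define i0 where "i0 = (SOME i. i \<in> Tr \<and> y i = 0)"
  define i1 where "i1 = (SOME i. i \<in> Tr \<and> y i = 1)"
  have i0: "i0 \<in> Tr \<and> y i0 = 0" unfolding i0_def using Tr0 by (metis (mono_tags, lifting) someI_ex)
  have i1: "i1 \<in> Tr \<and> y i1 = 1" unfolding i1_def using Tr1 by (metis (mono_tags, lifting) someI_ex)
  have z0: "real (card {j\<in>?N i0. y j = 0}) = h * real d"
  proof -
    have "local_homophily V E y i0 = h" using Trhom i0 by blast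
    then have "real (card {j\<in>?N i0. y j = 0}) / real d = h"
      unfolding local_homophily_def using i0 Trdeg by simp
    then show ?thesis using dpos by (simp add: field_simps)
  qed
  have rep0: "rep V E y p i0 = vector [a, b, h*real d*a + (real d - h*real d)*b, h*real d*b + (real d - h*real d)*a]"
    unfolding rep_eq[OF finV] cs z0 using i0 Trdeg f0 a_def b_def by simp
  have n1: "real (card {j\<in>?N i1. y j \<noteq> 0}) = h * real d"
  proof -
    have "local_homophily V E y i1 = h" using Trhom i1 by blast
    then have "real (card {j\<in>?N i1. y j = 1}) / real d = h"
      unfolding local_homophily_def using i1 Trdeg by simp
    then have "real (card {j\<in>?N i1. y j = 1}) = h * real d" using dpos by (simp add: field_simps)
    moreover have "{j\<in>?N i1. y j = 1} = {j\<in>?N i1. y j \<noteq> 0}"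
      using cls Nsub by fastforce
    ultimately show ?thesis by simp
  qed
  have z1: "real (card {j\<in>?N i1. y j = 0}) = real d - h * real d"
    using cs[of i1] n1 i1 Trdeg by simp
  have rep1: "rep V E y p i1 = vector [b, a, h*real d*b + (real d - h*real d)*a, h*real d*a + (real d - h*real d)*b]"
  proof -
    have y1: "y i1 = 1" using i1 by simp
    show ?thesis unfolding rep_eq[OF finV] z1 n1 y1 f1 by (simp add: a_def b_def algebra_simps)
  qed
  define sv where "sv = real (card {j\<in>?N t. y j = 0})"
  have ht: "local_homophily V E y t = sv / real d"
    unfolding local_homophily_def sv_def using t0 tdeg by simp
  have rept: "rep V E y p t = vector [a, b, sv*a + (real d - sv)*b, sv * b + (real d - sv)*a]"
    unfolding rep_eq[OF finV] cs using t0 tdeg f0 sv_def by (simp add: a_def b_def)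
  have ab: "a \<noteq> b" "a + b \<noteq> 0" unfolding a_def b_def using p01 by simp_all
  note C = core[OF ab, of "h*real d*a + (real d - h*real d)*b" "h*real d*b + (real d - h*real d)*a"
     "sv*a + (real d - sv)*b" "sv * b + (real d - sv)*a"]
  note F = fin[OF dpos p01(1), where h=h and sv=sv, folded a_def b_def]
  show ?thesis
    unfolding Let_def i0_def[symmetric] i1_def[symmetric] rep0 rep1 rept ht
    unfolding C[unfolded Let_def]
    using F by (simp add: vec_eq_iff forall_2 onehot_def)
qed

end
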